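(* Let $B\ge1$, $\mathcal{E}>0$, $c>0$, and $\mathsf{MSE}(\mathbf{i},\mathbf{t})=c\sum_{b=0}^{B-1}4^b\exp(-2(i_b-1)t_b)$. Let $\mathbf{i}^{(0)}=(2,\dots,2)$, $\mathbf{t}^{(0)}=\frac{\mathcal{E}}{4B}(1,\dots,1)$ (uniform energy allocation), and let $\widetilde{\mathbf{t}}$ be the optimal solution of minimizing $\sum_b4^b\exp(-2t_b)$ subject to $\sum_b 4t_b\le\mathcal{E}$, $t_b\ge0$. If $\mathcal{E}>2B(B-1)\log2$, then $$\mathsf{MSE}(\mathbf{i}^{(0)},\widetilde{\mathbf{t}})=c\cdot\frac{B}{2}\cdot2^B\exp\Bigl(-\frac{\mathcal{E}}{2B}\Bigr),\qquad \mathsf{MSE}(\mathbf{i}^{(0)},\mathbf{t}^{(0)})=c\cdot\frac{4^B-1}{3}\exp\Bigl(-\frac{\mathcal{E}}{2B}\Bigr),$$ and hence $$\gamma=\frac{\mathsf{MSE}(\mathbf{i}^{(0)},\widetilde{\mathbf{t}})}{\mathsf{MSE}(\mathbf{i}^{(0)},\mathbf{t}^{(0)})}=\frac{3B}{2}\cdot\frac{2^B}{4^B-1}.$$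
   Context: $\log$ denotes the natural logarithm. $\widetilde{\mathbf{t}}$ is the output of one step of alternate convex search (duration update) with currents fixed at $i_b=2$ for all $b$. *)

theory Defs
  imports Complex_Main
begin

text \<open>Vectors indexed by b = 0..B-1 are represented as functions nat => real;
  only the values at b < B matter.\<close>

definition MSE :: "real \<Rightarrow> nat \<Rightarrow> (nat \<Rightarrow> real) \<Rightarrow> (nat \<Rightarrow> real) \<Rightarrow> real" where
  "MSE c B i t = c * (\<Sum>b<B. 4 ^ b * exp (- 2 * (i b - 1) * t b))"

definition dur_obj :: "nat \<Rightarrow> (nat \<Rightarrow> real) \<Rightarrow> real" where
  "dur_obj B t = (\<Sum>b<B. 4 ^ b * exp (- 2 * t b))"

definition dur_feasible :: "nat \<Rightarrow> real \<Rightarrow> (nat \<Rightarrow> real) \<Rightarrow> bool" where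
  "dur_feasible B E t \<longleftrightarrow> (\<Sum>b<B. 4 * t b) \<le> E \<and> (\<forall>b<B. 0 \<le> t b)"

definition dur_optimal :: "nat \<Rightarrow> real \<Rightarrow> (nat \<Rightarrow> real) \<Rightarrow> bool" where
  "dur_optimal B E t \<longleftrightarrow> dur_feasible B E t \<and>
     (\<forall>s. dur_feasible B E s \<longrightarrow> dur_obj B t \<le> dur_obj B s)"

end

theory Submission
  imports Defs
begin

lemma gauss_real: "(\<Sum>b<B. real b) = real B * (real B - 1) / 2"
  by (induction B) (auto simp: field_simps)

lemma four_pow: "(4::real) ^ b = exp (2 * real b * ln 2)"
proof -
  have "(4::real) ^ b = (2 ^ 2) ^ b" by simp
  also have "\<dots> = (2 ^ b) ^ 2" by (simp only: power_mult[symmetric] mult.commute)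
  also have "(2::real) ^ b = exp (real b * ln 2)"
    by (metis exp_ln_iff exp_of_nat_mult zero_less_numeral ln_exp)
  finally show ?thesis by (simp add: power2_eq_square exp_add[symmetric])
qed
lemma t1: fixes B::nat and E K :: real assumes Bpos: "real B > 0" and K_def: "K = exp ((real B - 1) * ln 2 - E / (2 * real B))"
 and ts_def: "ts = (\<lambda>b::nat. real b * ln 2 + E / (4 * real B) - (real B - 1) * ln 2 / 2)"
 shows "4 ^ b * exp (- 2 * ts b) = K"
proof -
  have "4 ^ b * exp (- 2 * ts b) = exp (2 * real b * ln 2 + (- 2 * ts b))"
    unfolding four_pow exp_add by simp
  also have "2 * real b * ln 2 + (- 2 * ts b) = (real B - 1) * ln 2 - E / (2 * real B)"
    unfolding ts_def using Bpos by (simp add: field_simps)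
  finally show ?thesis using K_def by simp
qed
lemma t2: fixes K s ts :: real assumes "4 ^ b * exp (- 2 * ts) = K"
  shows "4 ^ b * exp (- 2 * s) = K * exp (- 2 * (s - ts))"
proof -
  have "exp (- 2 * s) = exp (- 2 * ts) * exp (- 2 * (s - ts))"
    unfolding exp_add[symmetric] by (simp add: algebra_simps)
  thus ?thesis using assms by (metis mult.assoc)
qed

lemma geo4: "(\<Sum>b<B. (4::real) ^ b) = (4 ^ B - 1) / 3"
  by (induction B) (auto simp: field_simps)

theorem theorem5:
  fixes B :: nat and E c :: real and tt :: "nat \<Rightarrow> real"
  assumes "B \<ge> 1" and "E > 0" and "c > 0"
    and "dur_optimal B E tt"
    and "E > 2 * real B * (real B - 1) * ln 2"
  shows "MSE c B (\<lambda>_. 2) tt = c * (real B / 2) * 2 ^ B * exp (- E / (2 * real B))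
    \<and> MSE c B (\<lambda>_. 2) (\<lambda>_. E / (4 * real B)) = c * ((4 ^ B - 1) / 3) * exp (- E / (2 * real B))
    \<and> MSE c B (\<lambda>_. 2) tt / MSE c B (\<lambda>_. 2) (\<lambda>_. E / (4 * real B))
        = (3 * real B / 2) * (2 ^ B / (4 ^ B - 1))"
proof -
  have Bpos: "real B > 0" using assms(1) by simp
  define K where "K = exp ((real B - 1) * ln 2 - E / (2 * real B))"
  define ts where "ts = (\<lambda>b::nat. real b * ln 2 + E / (4 * real B) - (real B - 1) * ln 2 / 2)"
  have Kpos: "K > 0" unfolding K_def by simp
  have term_ts: "4 ^ b * exp (- 2 * ts b) = K" for b
    by (rule t1[OF Bpos K_def ts_def])
  have sum_ts: "(\<Sum>b<B. ts b) = E / 4"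
  proof -
    have "(\<Sum>b<B. ts b) = (\<Sum>b<B. real b) * ln 2 + real B * (E / (4 * real B) - (real B - 1) * ln 2 / 2)"
      unfolding ts_def by (simp add: sum.distrib sum_subtractf sum_distrib_right algebra_simps)
    also have "\<dots> = E / 4" unfolding gauss_real using Bpos by (simp add: field_simps)
    finally show ?thesis .
  qed
  have ts_nonneg: "0 \<le> ts b" for b
  proof -
    have "(real B - 1) * ln 2 / 2 < E / (4 * real B)"
      using assms(5) Bpos by (simp add: field_simps)
    moreover have "0 \<le> real b * ln 2" by simp
    ultimately show ?thesis unfolding ts_def by linarith
  qed
  have feas_ts: "dur_feasible B E ts"
    unfolding dur_feasible_def using sum_ts ts_nonneg by (simp add: sum_distrib_left[symmetric])
  have obj_ts: "dur_obj B ts = real B * K"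
    unfolding dur_obj_def term_ts by simp
  have lower: "real B * K \<le> dur_obj B s" if fs: "dur_feasible B E s" for s
  proof -
    have "K * (1 - 2 * (s b - ts b)) \<le> 4 ^ b * exp (- 2 * s b)" for b
    proof -
      have "4 ^ b * exp (- 2 * s b) = K * exp (- 2 * (s b - ts b))"
        by (rule t2[OF term_ts])
      moreover have "1 - 2 * (s b - ts b) \<le> exp (- 2 * (s b - ts b))"
        using exp_ge_add_one_self[of "- 2 * (s b - ts b)"] by linarith
      ultimately show ?thesis using Kpos by simp
    qed
    hence "(\<Sum>b<B. K * (1 - 2 * (s b - ts b))) \<le> dur_obj B s"
      unfolding dur_obj_def by (rule sum_mono)
    moreover have "(\<Sum>b<B. K * (1 - 2 * (s b - ts b))) = K * (real B - 2 * ((\<Sum>b<B. s b) - E/4))"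
    proof -
      have "(\<Sum>b<B. K * (1 - 2 * (s b - ts b))) = (\<Sum>b<B. K - 2 * K * s b + 2 * K * ts b)"
        by (rule sum.cong) (auto simp: algebra_simps)
      also have "\<dots> = real B * K - 2 * K * (\<Sum>b<B. s b) + 2 * K * (\<Sum>b<B. ts b)"
        by (simp add: sum.distrib sum_subtractf sum_distrib_left)
      finally show ?thesis using sum_ts by (simp add: algebra_simps)
    qed
    moreover have "(\<Sum>b<B. s b) \<le> E / 4"
      using fs unfolding dur_feasible_def by (simp add: sum_distrib_left[symmetric])
    moreover have "K * real B \<le> K * (real B - 2 * ((\<Sum>b<B. s b) - E/4))"
      using Kpos \<open>(\<Sum>b<B. s b) \<le> E / 4\<close> by (intro mult_left_mono) auto
    ultimately show ?thesis by (simp add: mult.commute)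
  qed
  have opt: "dur_obj B tt = real B * K"
  proof -
    have "dur_obj B tt \<le> dur_obj B ts" using assms(4) feas_ts unfolding dur_optimal_def by blast
    moreover have "real B * K \<le> dur_obj B tt" using assms(4) lower unfolding dur_optimal_def by blast
    ultimately show ?thesis using obj_ts by linarith
  qed
  have K2: "K = 2 ^ B / 2 * exp (- E / (2 * real B))"
  proof -
    have "K = exp ((real B - 1) * ln 2) * exp (- E / (2 * real B))"
      unfolding K_def by (simp add: exp_add[symmetric])
    moreover have "exp ((real B - 1) * ln 2) = 2 ^ B / 2"
    proof -
      have "exp ((real B - 1) * ln 2) = exp (real B * ln 2) / 2"
        by (simp add: algebra_simps exp_diff)
      also have "exp (real B * ln 2) = 2 ^ B"
        by (metis exp_ln_iff exp_of_nat_mult zero_less_numeral ln_exp)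
      finally show ?thesis .
    qed
    ultimately show ?thesis by simp
  qed
  have m1: "MSE c B (\<lambda>_. 2) tt = c * (real B / 2) * 2 ^ B * exp (- E / (2 * real B))"
    using opt unfolding MSE_def dur_obj_def K2 by simp
  have m2: "MSE c B (\<lambda>_. 2) (\<lambda>_. E / (4 * real B)) = c * ((4 ^ B - 1) / 3) * exp (- E / (2 * real B))"
  proof -
    have "MSE c B (\<lambda>_. 2) (\<lambda>_. E / (4 * real B)) = c * ((\<Sum>b<B. 4 ^ b) * exp (- E / (2 * real B)))"
    proof -
      have e: "- 2 * (2 - 1) * (E / (4 * real B)) = - E / (2 * real B)" using Bpos by (simp add: field_simps)
      show ?thesis unfolding MSE_def e by (simp add: sum_distrib_right)
    qed
    thus ?thesis unfolding geo4 by simp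
  qed
  have g: "(4::real) ^ B > 1" using assms(1) by (simp add: one_less_power)
  have m3: "MSE c B (\<lambda>_. 2) tt / MSE c B (\<lambda>_. 2) (\<lambda>_. E / (4 * real B))
        = (3 * real B / 2) * (2 ^ B / (4 ^ B - 1))"
    unfolding m1 m2 using g assms(3) by (simp add: field_simps)
  show ?thesis using m1 m2 m3 by blast
qed

end
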